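(* For any input word $w\neq\sharp$, the LinMaxMatch tokenization procedure returns exactly the MaxMatch result $M(w)$: it calls MatchLoop$(w\sqcup,0)$ on the (non-augmented) trie, obtaining (tokens, $u$, $i$); if $i<|w|$ or $u\notin\{r,r_\sharp\}$ it returns $[\mathrm{UNK}]$, otherwise it returns tokens, and this output equals $M(w)$.
   Context: Setting: WordPiece tokenization with vocabulary $V$, suffix indicator string $\sharp$ (e.g. "##"), unknown token $[\mathrm{UNK}]$; $\sqcup$ is a whitespace character not in the vocabulary alphabet. A trie is built from $V$ with root $r$ and node $r_\sharp$ for $\sharp$; $\delta(u,c)$ is the child of $u$ along edge $c$, or null; $\chi_v$ is the string of node $v$. $p_w$: longest non-empty prefix of $w$ in $V\setminus\{\varepsilon,\sharp\}$ (length not counting a leading $\sharp$; must start with $\sharp$ if $w$ does), $\varepsilon$ if none; $q_w:=\sharp w''$ where $w=p_w w''$. MaxMatch: $M(w)=[\,]$ if $w\in\{\varepsilon,\sharp\}$; else $[\mathrm{UNK}]$ if $p_w=\varepsilon$ or $M(q_w)=[\mathrm{UNK}]$; else $[p_w]+M(q_w)$. Failure link $f(v)$ and failure pops $F(v)$ of a node $v$ (with $w=\chi_v$): if $p_w=\varepsilon$ then $f(v)=\mathrm{null}$, $F(v)=[\,]$; otherwise $F(v)$ is the shortest non-empty list of successive longest-matching-prefix tokens popped from the start of $w$ until the remaining suffix (prefixed with $\sharp$) is represented by a trie node, and $f(v)$ is that node (null if impossible). MatchLoop$(s,i)$: set $u=r$, tokens $=[\,]$; while $i<|s|$: while $\delta(u,s[i])=\mathrm{null}$: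 if $f(u)=\mathrm{null}$ return (tokens,$u$,$i$); append $F(u)$ to tokens; $u\leftarrow f(u)$. Then $u\leftarrow\delta(u,s[i])$, $i\leftarrow i+1$. Finally return (tokens,$u$,$i$). *)

theory Defs
  imports Main "HOL-Library.While_Combinator" "HOL-Library.Sublist"
begin

text \<open>Strings are lists of characters of type 'a. V is the vocabulary, sh the
suffix indicator, ws the whitespace character. Tokens are vocabulary strings or UNK.\<close>

datatype 'a token = Tok "'a list" | UNK

definition cand :: "'a list set \<Rightarrow> 'a list \<Rightarrow> 'a list \<Rightarrow> 'a list \<Rightarrow> bool" where
  "cand V sh w p \<longleftrightarrow> p \<in> V - {[], sh} \<and> prefix p w \<and> (prefix sh w \<longrightarrow> prefix sh p)"

definition pw :: "'a list set \<Rightarrow> 'a list \<Rightarrow> 'a list \<Rightarrow> 'a list" where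
  "pw V sh w = (if \<exists>p. cand V sh w p
     then (THE p. cand V sh w p \<and> (\<forall>q. cand V sh w q \<longrightarrow> length q \<le> length p))
     else [])"

definition qw :: "'a list set \<Rightarrow> 'a list \<Rightarrow> 'a list \<Rightarrow> 'a list" where
  "qw V sh w = sh @ drop (length (pw V sh w)) w"

definition mu :: "'a list \<Rightarrow> 'a list \<Rightarrow> nat" where
  "mu sh w = length w - (if prefix sh w then length sh else 0)"

lemma cand_finite: "finite {p. cand V sh w p}"
proof -
  have "{p. cand V sh w p} \<subseteq> set (prefixes w)" by (auto simp: cand_def)
  then show ?thesis using finite_subset by blast
qed

lemma cand_longest_ex:
  assumes "cand V sh w p0"
  shows "\<exists>p. cand V sh w p \<and> (\<forall>q. cand V sh w q \<longrightarrow> length q \<le> length p)"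
proof -
  let ?S = "{p. cand V sh w p}"
  have ne: "length ` ?S \<noteq> {}" using assms by auto
  have fin: "finite (length ` ?S)" using cand_finite by blast
  obtain p where "p \<in> ?S" "length p = Max (length ` ?S)"
    using Max_in[OF fin ne] by auto
  moreover have "length q \<le> length p" if "cand V sh w q" for q
  proof -
    have "length q \<in> length ` ?S" using that by blast
    then show ?thesis using Max_ge[OF fin] \<open>length p = _\<close> by simp
  qed
  ultimately show ?thesis by blast
qed

lemma pw_cand:
  assumes "\<exists>p. cand V sh w p"
  shows "cand V sh w (pw V sh w)"
proof -
  obtain p where p: "cand V sh w p" "\<forall>q. cand V sh w q \<longrightarrow> length q \<le> length p"
    using assms cand_longest_ex by blast
  have uniq: "x = p" if "cand V sh w x" "\<forall>q. cand V sh w q \<longrightarrow> length q \<le> length x" for x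
  proof -
    have "length x = length p" using that p by (meson le_antisym)
    moreover have "prefix x w" "prefix p w" using that p by (auto simp: cand_def)
    ultimately have "prefix x p" "prefix p x" using prefix_length_prefix[of x w p] prefix_length_prefix[of p w x] by auto
    then show ?thesis by (rule prefix_order.antisym)
  qed
  have "(THE x. cand V sh w x \<and> (\<forall>q. cand V sh w q \<longrightarrow> length q \<le> length x)) = p"
    apply (rule the_equality)
    using p uniq by blast+
  then show ?thesis using assms p by (simp add: pw_def)
qed

lemma pw_decreases:
  assumes "pw V sh w \<noteq> []"
  shows "mu sh (qw V sh w) < mu sh w"
proof -
  have ex: "\<exists>p. cand V sh w p"
  proof (rule ccontr)
    assume "\<not> (\<exists>p. cand V sh w p)"
    then have "pw V sh w = []" unfolding pw_def by (rule if_not_P)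
    then show False using assms by simp
  qed
  have c: "cand V sh w (pw V sh w)" using pw_cand[OF ex] .
  let ?p = "pw V sh w"
  have pre: "prefix ?p w" and ne: "?p \<noteq> []" and nsh: "?p \<noteq> sh"
    and psh: "prefix sh w \<longrightarrow> prefix sh ?p" using c unfolding cand_def by simp_all
  have lp: "length ?p \<le> length w" using pre by (simp add: prefix_length_le)
  have mq: "mu sh (qw V sh w) = length w - length ?p" by (simp add: mu_def qw_def)
  show ?thesis
  proof (cases "prefix sh w")
    case True
    then have "prefix sh ?p" using psh by simp
    then have "strict_prefix sh ?p" using nsh by (simp add: strict_prefix_def)
    then have "length sh < length ?p" by (rule prefix_length_less)
    then show ?thesis using True mq lp by (simp add: mu_def)
  next
    case False
    have "0 < length ?p" using ne by simp
    then have "length w - length ?p < length w" using lp by linarith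
    then show ?thesis using False mq by (simp add: mu_def)
  qed
qed

function MaxMatch :: "'a list set \<Rightarrow> 'a list \<Rightarrow> 'a list \<Rightarrow> 'a token list" where
  "MaxMatch V sh w =
     (if w = [] \<or> w = sh then []
      else if pw V sh w = [] then [UNK]
      else if MaxMatch V sh (qw V sh w) = [UNK] then [UNK]
      else Tok (pw V sh w) # MaxMatch V sh (qw V sh w))"
  by auto
termination
  by (relation "measure (\<lambda>(V, sh, w). mu sh w)") (simp_all add: pw_decreases)

text \<open>Trie nodes are identified with their strings chi_v: all prefixes of
vocabulary strings and of sh. The root r is [] and r_sh is sh.\<close>
definition trie_nodes :: "'a list set \<Rightarrow> 'a list \<Rightarrow> 'a list set" where
  "trie_nodes V sh = {x. \<exists>v \<in> V \<union> {sh}. prefix x v}"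

definition delta :: "'a list set \<Rightarrow> 'a list \<Rightarrow> 'a list \<Rightarrow> 'a \<Rightarrow> 'a list option" where
  "delta V sh u c = (if u @ [c] \<in> trie_nodes V sh then Some (u @ [c]) else None)"

function fpops :: "'a list set \<Rightarrow> 'a list \<Rightarrow> 'a list \<Rightarrow> ('a token list \<times> 'a list) option" where
  "fpops V sh x =
     (if pw V sh x = [] then None
      else if qw V sh x \<in> trie_nodes V sh then Some ([Tok (pw V sh x)], qw V sh x)
      else (case fpops V sh (qw V sh x) of
              None \<Rightarrow> None
            | Some (ts, u) \<Rightarrow> Some (Tok (pw V sh x) # ts, u)))"
  by auto
termination
  by (relation "measure (\<lambda>(V, sh, x). mu sh x)") (simp_all add: pw_decreases)

definition fail_link :: "'a list set \<Rightarrow> 'a list \<Rightarrow> 'a list \<Rightarrow> 'a list option" where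
  "fail_link V sh u = map_option snd (fpops V sh u)"

definition fail_pops :: "'a list set \<Rightarrow> 'a list \<Rightarrow> 'a list \<Rightarrow> 'a token list" where
  "fail_pops V sh u = (case fpops V sh u of None \<Rightarrow> [] | Some (ts, _) \<Rightarrow> ts)"

text \<open>MatchLoop(s, i0), with the nested while loops flattened into one loop over
states (tokens, u, i, returned). Result None means the loop does not terminate.\<close>
definition MatchLoop :: "'a list set \<Rightarrow> 'a list \<Rightarrow> 'a list \<Rightarrow> nat
    \<Rightarrow> ('a token list \<times> 'a list \<times> nat) option" where
  "MatchLoop V sh s i0 =
     map_option (\<lambda>(t, u, i, ret). (t, u, i))
      (while_option (\<lambda>(t, u, i, ret). \<not> ret \<and> i < length s)
        (\<lambda>(t, u, i, ret).
           case delta V sh u (s ! i) of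
             Some u' \<Rightarrow> (t, u', Suc i, False)
           | None \<Rightarrow> (case fail_link V sh u of
                         None \<Rightarrow> (t, u, i, True)
                       | Some u' \<Rightarrow> (t @ fail_pops V sh u, u', i, False)))
        ([], [], i0, False))"

definition LinMaxMatch :: "'a list set \<Rightarrow> 'a list \<Rightarrow> 'a \<Rightarrow> 'a list \<Rightarrow> 'a token list option" where
  "LinMaxMatch V sh ws w =
     map_option (\<lambda>(t, u, i). if i < length w \<or> u \<notin> {[], sh} then [UNK] else t)
       (MatchLoop V sh (w @ [ws]) 0)"

end

theory Submission
  imports Defs
begin

declare MaxMatch.simps[simp del] fpops.simps[simp del]

definition comb :: "'a token list \<Rightarrow> 'a token list \<Rightarrow> 'a token list" where
  "comb t m = (if m = [UNK] then [UNK] else t @ m)"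

lemma comb_nil[simp]: "comb [] m = m" by (simp add: comb_def)

lemma comb_assoc:
  assumes "UNK \<notin> set t" "UNK \<notin> set ps"
  shows "comb t (comb ps m) = comb (t @ ps) m"
proof (cases "m = [UNK]")
  case True then show ?thesis by (simp add: comb_def)
next
  case False
  have "ps @ m \<noteq> [UNK]"
  proof
    assume "ps @ m = [UNK]"
    then have "ps = [] \<and> m = [UNK] \<or> ps = [UNK]" by (cases ps) auto
    then show False using False assms by auto
  qed
  then show ?thesis using False by (simp add: comb_def)
qed

lemma trie_prefix: "y \<in> trie_nodes V sh \<Longrightarrow> prefix x y \<Longrightarrow> x \<in> trie_nodes V sh"
  by (auto simp: trie_nodes_def intro: prefix_order.trans)

lemma cand_ext:
  assumes "z = [] \<or> x @ [hd z] \<notin> trie_nodes V sh"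
  shows "cand V sh (x @ z) p \<longleftrightarrow> cand V sh x p"
proof (cases z)
  case Nil then show ?thesis by simp
next
  case (Cons c z')
  have nt: "x @ [c] \<notin> trie_nodes V sh" using assms Cons by simp
  have sh1: "prefix sh (x @ z) \<longleftrightarrow> prefix sh x"
  proof
    assume "prefix sh (x @ z)"
    then consider "prefix sh x" | us where "sh = x @ us" "prefix us z"
      by (auto simp: prefix_append)
    then show "prefix sh x"
    proof cases
      case (2 us)
      show ?thesis
      proof (cases us)
        case Nil then show ?thesis using 2 by simp
      next
        case (Cons d us')
        then have "d = c" using 2 \<open>z = c # z'\<close> by simp
        then have "prefix (x @ [c]) sh" using 2 Cons by simp
        then have "x @ [c] \<in> trie_nodes V sh" by (auto simp: trie_nodes_def)
        then show ?thesis using nt by simp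
      qed
    qed simp
  qed (auto simp: prefix_append)
  have pp: "prefix p (x @ z) \<longleftrightarrow> prefix p x" if "p \<in> V" for p
  proof
    assume "prefix p (x @ z)"
    then consider "prefix p x" | us where "p = x @ us" "prefix us z"
      by (auto simp: prefix_append)
    then show "prefix p x"
    proof cases
      case (2 us)
      show ?thesis
      proof (cases us)
        case Nil then show ?thesis using 2 by simp
      next
        case (Cons d us')
        then have "d = c" using 2 \<open>z = c # z'\<close> by simp
        then have "prefix (x @ [c]) p" using 2 Cons by simp
        then have "x @ [c] \<in> trie_nodes V sh" using that by (auto simp: trie_nodes_def)
        then show ?thesis using nt by simp
      qed
    qed simp
  qed (auto simp: prefix_append)
  show ?thesis using sh1 pp by (auto simp: cand_def)
qed

lemma pw_ext:
  assumes "z = [] \<or> x @ [hd z] \<notin> trie_nodes V sh"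
  shows "pw V sh (x @ z) = pw V sh x"
proof -
  have "cand V sh (x @ z) = cand V sh x" using cand_ext[OF assms] by blast
  then show ?thesis by (simp add: pw_def)
qed

lemma pw_nil: "pw V sh [] = []"
  by (auto simp: pw_def cand_def)

lemma pw_sh: "pw V sh sh = []"
proof -
  have "\<not> cand V sh sh p" for p
    by (auto simp: cand_def dest: prefix_order.antisym)
  then show ?thesis by (simp add: pw_def)
qed

lemma pw_prefix: assumes "pw V sh x \<noteq> []" shows "prefix (pw V sh x) x"
proof -
  have "\<exists>p. cand V sh x p"
  proof (rule ccontr)
    assume "\<not> (\<exists>p. cand V sh x p)"
    then have "pw V sh x = []" unfolding pw_def by (rule if_not_P)
    then show False using assms by simp
  qed
  then show ?thesis using pw_cand by (auto simp: cand_def)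
qed

lemma qw_ext:
  assumes "pw V sh x \<noteq> []" "z = [] \<or> x @ [hd z] \<notin> trie_nodes V sh"
  shows "qw V sh (x @ z) = qw V sh x @ z"
proof -
  have "length (pw V sh x) \<le> length x" using pw_prefix[OF assms(1)] prefix_length_le by blast
  then show ?thesis using pw_ext[OF assms(2)] by (simp add: qw_def)
qed

lemma M_step:
  assumes "pw V sh y \<noteq> []"
  shows "MaxMatch V sh y = comb [Tok (pw V sh y)] (MaxMatch V sh (qw V sh y))"
proof -
  have "y \<noteq> []" "y \<noteq> sh" using assms pw_nil pw_sh by metis+
  then show ?thesis using assms by (subst MaxMatch.simps) (simp add: comb_def)
qed

lemma M_stop:
  assumes "pw V sh y = []"
  shows "MaxMatch V sh y = (if y = [] \<or> y = sh then [] else [UNK])"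
  using assms by (subst MaxMatch.simps) simp

lemma fpops_some:
  "fpops V sh x = Some (ps, u') \<Longrightarrow> (z = [] \<or> x @ [hd z] \<notin> trie_nodes V sh) \<Longrightarrow>
   MaxMatch V sh (x @ z) = comb ps (MaxMatch V sh (u' @ z)) \<and> UNK \<notin> set ps
   \<and> mu sh u' < mu sh x"
proof (induction V sh x arbitrary: ps u' rule: fpops.induct)
  case (1 V sh x)
  have pne: "pw V sh x \<noteq> []"
  proof
    assume "pw V sh x = []"
    then have "fpops V sh x = None" by (subst fpops.simps) simp
    then show False using "1.prems" by simp
  qed
  have pe: "pw V sh (x @ z) = pw V sh x" using pw_ext "1.prems"(2) by blast
  have qe: "qw V sh (x @ z) = qw V sh x @ z" using qw_ext pne "1.prems"(2) by blast
  have M1: "MaxMatch V sh (x @ z) = comb [Tok (pw V sh x)] (MaxMatch V sh (qw V sh x @ z))"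
    using M_step[of V sh "x @ z"] pe qe pne by simp
  have dec: "mu sh (qw V sh x) < mu sh x" using pw_decreases pne by blast
  show ?case
  proof (cases "qw V sh x \<in> trie_nodes V sh")
    case True
    have "fpops V sh x = Some ([Tok (pw V sh x)], qw V sh x)" using True pne
      by (subst fpops.simps) simp
    then have "ps = [Tok (pw V sh x)]" "u' = qw V sh x" using "1.prems" by simp_all
    then show ?thesis using M1 dec by simp
  next
    case False
    have fe: "fpops V sh x = (case fpops V sh (qw V sh x) of None \<Rightarrow> None
            | Some (ts, u) \<Rightarrow> Some (Tok (pw V sh x) # ts, u))" using False pne
      by (subst fpops.simps) simp
    then obtain ts where f2: "fpops V sh (qw V sh x) = Some (ts, u')" and ps: "ps = Tok (pw V sh x) # ts"
      using "1.prems" by (auto split: option.splits)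
    have c2: "z = [] \<or> qw V sh x @ [hd z] \<notin> trie_nodes V sh"
      using False trie_prefix by (metis prefix_def)
    have IH: "MaxMatch V sh (qw V sh x @ z) = comb ts (MaxMatch V sh (u' @ z)) \<and> UNK \<notin> set ts
       \<and> mu sh u' < mu sh (qw V sh x)"
      using "1.IH"[OF pne False f2 c2] .
    have "MaxMatch V sh (x @ z) = comb ([Tok (pw V sh x)] @ ts) (MaxMatch V sh (u' @ z))"
      using M1 IH comb_assoc[of "[Tok (pw V sh x)]" ts] by simp
    then show ?thesis using IH ps dec by simp
  qed
qed

lemma fpops_none:
  "fpops V sh x = None \<Longrightarrow> sh \<noteq> [] \<Longrightarrow> (z = [] \<or> x @ [hd z] \<notin> trie_nodes V sh) \<Longrightarrow>
   MaxMatch V sh (x @ z) = (if x @ z = [] \<or> x @ z = sh then [] else [UNK])"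
proof (induction V sh x rule: fpops.induct)
  case (1 V sh x)
  have pe: "pw V sh (x @ z) = pw V sh x" using pw_ext "1.prems"(3) by blast
  show ?case
  proof (cases "pw V sh x = []")
    case True
    then show ?thesis using M_stop pe by metis
  next
    case pne: False
    have qe: "qw V sh (x @ z) = qw V sh x @ z" using qw_ext pne "1.prems"(3) by blast
    have M1: "MaxMatch V sh (x @ z) = comb [Tok (pw V sh x)] (MaxMatch V sh (qw V sh x @ z))"
      using M_step[of V sh "x @ z"] pe qe pne by simp
    have fe: "fpops V sh x = (if qw V sh x \<in> trie_nodes V sh then Some ([Tok (pw V sh x)], qw V sh x)
      else (case fpops V sh (qw V sh x) of None \<Rightarrow> None
            | Some (ts, u) \<Rightarrow> Some (Tok (pw V sh x) # ts, u)))" using pne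
      by (subst fpops.simps) simp
    have nt: "qw V sh x \<notin> trie_nodes V sh" and f2: "fpops V sh (qw V sh x) = None"
      using "1.prems"(1) fe by (auto split: if_splits option.splits)
    have c2: "z = [] \<or> qw V sh x @ [hd z] \<notin> trie_nodes V sh"
      using nt trie_prefix by (metis prefix_def)
    have IH: "MaxMatch V sh (qw V sh x @ z) = (if qw V sh x @ z = [] \<or> qw V sh x @ z = sh then [] else [UNK])"
      using "1.IH"[OF pne nt f2 "1.prems"(2) c2] .
    have "qw V sh x @ z \<noteq> []" using "1.prems"(2) by (simp add: qw_def)
    moreover have "qw V sh x @ z \<noteq> sh"
    proof
      assume "qw V sh x @ z = sh"
      then have "prefix (qw V sh x) sh" by (metis prefix_def)
      then have "qw V sh x \<in> trie_nodes V sh" by (auto simp: trie_nodes_def)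
      then show False using nt by simp
    qed
    moreover have "x @ z \<noteq> [] \<and> x @ z \<noteq> sh" using pe pne pw_nil pw_sh by metis
    ultimately show ?thesis using M1 IH by (simp add: comb_def)
  qed
qed



theorem mainTheorem5:
  fixes V :: "'a list set" and sh :: "'a list" and ws :: 'a and w :: "'a list"
  assumes "finite V"
    and "sh \<noteq> []"
    and "\<forall>v \<in> V. ws \<notin> set v"
    and "ws \<notin> set sh"
    and "w \<noteq> sh"
  shows "LinMaxMatch V sh ws w = Some (MaxMatch V sh w)"
proof -
  define s where "s = w @ [ws]"
  define b where "b = (\<lambda>(t::'a token list, u::'a list, i::nat, ret::bool). \<not> ret \<and> i < length s)"
  define c where "c = (\<lambda>(t::'a token list, u::'a list, i::nat, ret::bool).
           case delta V sh u (s ! i) of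
             Some u' \<Rightarrow> (t, u', Suc i, False)
           | None \<Rightarrow> (case fail_link V sh u of
                         None \<Rightarrow> (t, u, i, True)
                       | Some u' \<Rightarrow> (t @ fail_pops V sh u, u', i, False)))"
  define P where "P = (\<lambda>(t::'a token list, u::'a list, i::nat, ret::bool). i \<le> length w \<and> UNK \<notin> set t
     \<and> MaxMatch V sh w = comb t (MaxMatch V sh (u @ drop i w))
     \<and> (ret \<longrightarrow> fpops V sh u = None \<and> u @ [s ! i] \<notin> trie_nodes V sh))"
  have MLoop: "MatchLoop V sh s 0 = map_option (\<lambda>(t, u, i, ret). (t, u, i)) (while_option b c ([], [], 0, False))"
    unfolding MatchLoop_def b_def c_def by (rule refl)
  have wsnt: "u @ [ws] \<notin> trie_nodes V sh" for u
  proof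
    assume "u @ [ws] \<in> trie_nodes V sh"
    then obtain v where "v \<in> V \<union> {sh}" "prefix (u @ [ws]) v" by (auto simp: trie_nodes_def)
    then have "ws \<in> set v" using set_mono_prefix by fastforce
    then show False using assms(3,4) \<open>v \<in> V \<union> {sh}\<close> by auto
  qed
  have snth: "s ! i = (if i < length w then w ! i else ws)" if "i \<le> length w" for i
    using that by (auto simp: s_def nth_append)
  have cond: "drop i w = [] \<or> u @ [hd (drop i w)] \<notin> trie_nodes V sh"
    if "i \<le> length w" "u @ [s ! i] \<notin> trie_nodes V sh" for i u
  proof (cases "i < length w")
    case True
    then have "hd (drop i w) = w ! i" by (simp add: hd_drop_conv_nth)
    then show ?thesis using that True snth by simp
  qed (simp)
  have step: "P (c st)" if "P st" "b st" for st
  proof -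
    obtain t u i r where st: "st = (t, u, i, r)" by (cases st) auto
    have il: "i \<le> length w" and nU: "UNK \<notin> set t"
      and M: "MaxMatch V sh w = comb t (MaxMatch V sh (u @ drop i w))"
      using that st by (auto simp: P_def)
    show ?thesis
    proof (cases "delta V sh u (s ! i)")
      case (Some u')
      then have tn: "u @ [s ! i] \<in> trie_nodes V sh" and u': "u' = u @ [s ! i]"
        by (auto simp: delta_def split: if_splits)
      have ilt: "i < length w" using tn wsnt snth il by (cases "i < length w") auto
      then have "drop i w = w ! i # drop (Suc i) w" by (simp add: Cons_nth_drop_Suc)
      then have "u @ drop i w = u' @ drop (Suc i) w" using u' snth il ilt by simp
      then show ?thesis using Some st ilt nU M by (simp add: c_def P_def)
    next
      case None
      then have nt: "u @ [s ! i] \<notin> trie_nodes V sh" by (auto simp: delta_def split: if_splits)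
      show ?thesis
      proof (cases "fail_link V sh u")
        case None2: None
        then have "fpops V sh u = None" by (simp add: fail_link_def)
        then show ?thesis using None None2 st il nU M nt by (simp add: c_def P_def)
      next
        case (Some u'')
        then obtain ps where fp: "fpops V sh u = Some (ps, u'')"
          by (auto simp: fail_link_def)
        then have fpp: "fail_pops V sh u = ps" by (simp add: fail_pops_def)
        have "MaxMatch V sh (u @ drop i w) = comb ps (MaxMatch V sh (u'' @ drop i w)) \<and> UNK \<notin> set ps"
          using fpops_some[OF fp cond[OF il nt]] by blast
        then have "MaxMatch V sh w = comb (t @ ps) (MaxMatch V sh (u'' @ drop i w))" "UNK \<notin> set (t @ ps)"
          using M nU comb_assoc[of t ps] by auto
        then show ?thesis using None Some st il fpp by (simp add: c_def P_def)
      qed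
    qed
  qed
  have wf: "wf {(t', st). (P st \<and> b st) \<and> t' = c st}"
  proof (rule wf_subset[OF wf_measures[of "[\<lambda>(t, u, i, r). length s - i,
       \<lambda>(t, u, i, r). mu sh u + (if r then 0 else 1)]"]])
    show "{(t', st). (P st \<and> b st) \<and> t' = c st} \<subseteq> measures [\<lambda>(t, u, i, r). length s - i,
       \<lambda>(t, u, i, r). mu sh u + (if r then 0 else 1)]"
    proof -
     have key: "(c (t, u, i, r), (t, u, i, r)) \<in> measures [\<lambda>(t, u, i, r). length s - i,
       \<lambda>(t, u, i, r). mu sh u + (if r then 0 else 1)]" if Pst: "P (t, u, i, r)" and bst: "b (t, u, i, r)" for t u i r
     proof -
      from bst have nr: "\<not> r" and ilt: "i < length s" by (auto simp: b_def)
      show "(c (t, u, i, r), (t, u, i, r)) \<in> measures [\<lambda>(t, u, i, r). length s - i,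
       \<lambda>(t, u, i, r). mu sh u + (if r then 0 else 1)]"
      proof (cases "delta V sh u (s ! i)")
        case (Some u')
        then show ?thesis using ilt by (auto simp: c_def measures_less)
      next
        case None
        show ?thesis
        proof (cases "fail_link V sh u")
          case None2: None
          then show ?thesis using None nr by (simp add: c_def measures_lesseq measures_less)
        next
          case (Some u'')
          then obtain ps where fp: "fpops V sh u = Some (ps, u'')"
            by (auto simp: fail_link_def)
          have "mu sh u'' < mu sh u" using fpops_some[OF fp, of "[]"] by simp
          then show ?thesis using None Some nr by (simp add: c_def measures_lesseq measures_less)
        qed
      qed
     qed
     show ?thesis using key by auto
    qed
  qed
  have P0: "P ([], [], 0, False)" by (simp add: P_def)
  obtain fin where W: "while_option b c ([], [], 0, False) = Some fin"
    using wf_while_option_Some[OF wf step P0] by blast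
  have Pf: "P fin" using while_option_rule[of P b c, OF step W P0] by blast
  have nb: "\<not> b fin" using while_option_stop[OF W] .
  obtain t u i r where fin: "fin = (t, u, i, r)" by (cases fin) auto
  have il: "i \<le> length w" and nU: "UNK \<notin> set t"
    and M: "MaxMatch V sh w = comb t (MaxMatch V sh (u @ drop i w))"
    and rr: "r \<longrightarrow> fpops V sh u = None \<and> u @ [s ! i] \<notin> trie_nodes V sh"
    using Pf fin by (auto simp: P_def)
  have r: r using nb fin il by (auto simp: b_def s_def)
  have fpn: "fpops V sh u = None" and nt: "u @ [s ! i] \<notin> trie_nodes V sh" using rr r by auto
  have MM: "MaxMatch V sh (u @ drop i w) = (if u @ drop i w = [] \<or> u @ drop i w = sh then [] else [UNK])"
    using fpops_none[OF fpn assms(2) cond[OF il nt]] .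
  have LM: "LinMaxMatch V sh ws w = Some (if i < length w \<or> u \<notin> {[], sh} then [UNK] else t)"
    using MLoop W fin by (simp add: LinMaxMatch_def s_def)
  show ?thesis
  proof (cases "i < length w")
    case True
    then have dne: "drop i w \<noteq> []" by simp
    have "u @ drop i w \<noteq> sh"
    proof
      assume e: "u @ drop i w = sh"
      have "hd (drop i w) = w ! i" using True by (simp add: hd_drop_conv_nth)
      then have "prefix (u @ [s ! i]) sh" using e dne True snth il
        by (metis append_Cons append_Nil append_assoc hd_Cons_tl prefixI)
      then have "u @ [s ! i] \<in> trie_nodes V sh" by (auto simp: trie_nodes_def)
      then show False using nt by simp
    qed
    then show ?thesis using LM M MM True dne by (simp add: comb_def)
  next
    case False
    then have "drop i w = []" by simp
    then show ?thesis using LM M MM False by (auto simp: comb_def)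
  qed
qed

end
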